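(* Let $\nu>0$, let $U$ be the gamma process with parameter $\nu$ and $V(t)=\inf\{\tau\ge0: U(\tau)>t\}$. Then for every $q>0$, $$\mathbb{E}\big(V(t)^q\big)\sim (\nu t)^q\quad\text{as } t\to\infty .$$
   Context: The gamma process with parameter $\nu>0$ is the Lévy process $\{U(t),t\ge0\}$ with $U(0)=0$, stationary independent increments, and $U(t)$ having density $f(x,t)=\frac{1}{\Gamma(t/\nu)}x^{t/\nu-1}e^{-x}$, $x>0$; its Laplace exponent is $\Psi_U(u)=\frac1\nu\log(1+u)$. The inverse gamma process is $V(t)=\inf\{\tau\ge 0: U(\tau)>t\}$. *)

theory Defs
  imports "HOL-Probability.Probability" "HOL-Library.Landau_Symbols"
begin

definition gamma_density :: "real \<Rightarrow> real \<Rightarrow> real \<Rightarrow> real" where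
  "gamma_density \<nu> t x =
     (if 0 < x then x powr (t / \<nu> - 1) * exp (- x) / Gamma (t / \<nu>) else 0)"

definition gamma_process :: "'a measure \<Rightarrow> real \<Rightarrow> (real \<Rightarrow> 'a \<Rightarrow> real) \<Rightarrow> bool" where
  "gamma_process M \<nu> U \<longleftrightarrow>
     prob_space M \<and> 0 < \<nu> \<and>
     (\<forall>t. U t \<in> borel_measurable M) \<and>
     (AE \<omega> in M. U 0 \<omega> = 0) \<and>
     (\<forall>\<omega>\<in>space M. \<forall>s\<ge>0. continuous (at_right s) (\<lambda>\<tau>. U \<tau> \<omega>)) \<and>
     (\<forall>\<omega>\<in>space M. \<forall>s>0. \<exists>l. ((\<lambda>\<tau>. U \<tau> \<omega>) \<longlongrightarrow> l) (at_left s)) \<and>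
     (\<forall>(n::nat) (ts::nat \<Rightarrow> real). 0 \<le> ts 0 \<longrightarrow> (\<forall>i<n. ts i < ts (Suc i)) \<longrightarrow>
        prob_space.indep_vars M (\<lambda>_. borel) (\<lambda>i \<omega>. U (ts (Suc i)) \<omega> - U (ts i) \<omega>) {..<n}) \<and>
     (\<forall>s h. 0 \<le> s \<longrightarrow> 0 \<le> h \<longrightarrow>
        distr M borel (\<lambda>\<omega>. U (s + h) \<omega> - U s \<omega>) = distr M borel (U h)) \<and>
     (\<forall>t>0. distributed M lborel (U t) (\<lambda>x. ennreal (gamma_density \<nu> t x)))"

definition inverse_process :: "(real \<Rightarrow> 'a \<Rightarrow> real) \<Rightarrow> real \<Rightarrow> 'a \<Rightarrow> real" where
  "inverse_process U t \<omega> = Inf {\<tau>. 0 \<le> \<tau> \<and> t < U \<tau> \<omega>}"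

end

theory Submission
  imports Defs "HOL-Real_Asymp.Real_Asymp"
begin

lemma gamma_nn:
  fixes a b :: real
  assumes a: "0 < a" and b: "0 < b"
  shows "(\<integral>\<^sup>+x. ennreal (if 0 < x then x powr (a - 1) * exp (-(b * x)) else 0) \<partial>lborel)
         = ennreal (Gamma a * b powr (-a))"
proof -
  define g where "g y = (if 0 < y then y powr (a - 1) * exp (- y) else 0)" for y :: real
  have gm[measurable]: "g \<in> borel_measurable borel" unfolding g_def by measurable
  have "((\<lambda>y. y powr (a - 1) / exp y) has_integral Gamma a) {0..}"
    using Gamma_integral_real[OF a] .
  hence "((\<lambda>y. if y \<in> {0..} then y powr (a - 1) / exp y else 0) has_integral Gamma a) UNIV"
    by (simp only: has_integral_restrict_UNIV)
  moreover have "(\<lambda>y. if y \<in> {0..} then y powr (a - 1) / exp y else 0) = g"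
    by (auto simp: g_def fun_eq_iff exp_minus field_simps)
  ultimately have hi: "(g has_integral Gamma a) UNIV" by simp
  have g0: "\<And>x. 0 \<le> g x" by (simp add: g_def)
  have I1: "(\<integral>\<^sup>+x. ennreal (g x) \<partial>lborel) = ennreal (Gamma a)"
    by (rule nn_integral_has_integral_lborel[OF gm g0 hi])
  have I2: "(\<integral>\<^sup>+x. ennreal (g x) \<partial>lborel) = ennreal \<bar>b\<bar> * (\<integral>\<^sup>+x. ennreal (g (0 + b * x)) \<partial>lborel)"
    by (rule nn_integral_real_affine) (use b in auto)
  have "\<And>x. g (0 + b * x) = b powr (a - 1) * (if 0 < x then x powr (a - 1) * exp (-(b * x)) else 0)"
    using b by (auto simp: g_def powr_mult zero_less_mult_iff)
  hence I3: "(\<integral>\<^sup>+x. ennreal (g (0 + b * x)) \<partial>lborel)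
     = ennreal (b powr (a - 1)) * (\<integral>\<^sup>+x. ennreal (if 0 < x then x powr (a - 1) * exp (-(b * x)) else 0) \<partial>lborel)"
    by (simp add: ennreal_mult nn_integral_cmult)
  define J where "J = (\<integral>\<^sup>+x. ennreal (if 0 < x then x powr (a - 1) * exp (-(b * x)) else 0) \<partial>lborel)"
  have "ennreal (Gamma a) = ennreal (b * b powr (a - 1)) * J"
    using I1 I2 I3 b unfolding J_def by (simp add: ennreal_mult mult.assoc)
  moreover have "b * b powr (a - 1) = b powr a" using b by (simp add: powr_diff field_simps)
  ultimately have E: "ennreal (Gamma a) = ennreal (b powr a) * J" by simp
  have "J = ennreal (b powr (-a)) * (ennreal (b powr a) * J)"
    using b by (simp add: ennreal_mult[symmetric] mult.assoc[symmetric] powr_add[symmetric])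
  also have "\<dots> = ennreal (b powr (-a)) * ennreal (Gamma a)" using E by simp
  also have "\<dots> = ennreal (b powr (-a) * Gamma a)"
    using a by (simp add: ennreal_mult Gamma_real_pos less_imp_le)
  finally show ?thesis unfolding J_def by (simp add: mult.commute)
qed

locale gp =
  fixes M :: "'a measure" and \<nu> :: real and U :: "real \<Rightarrow> 'a \<Rightarrow> real"
  assumes gpa: "gamma_process M \<nu> U"
begin

lemma ps: "prob_space M" using gpa by (simp add: gamma_process_def)

sublocale prob_space M by (rule ps)

lemma nu_pos: "0 < \<nu>" using gpa by (simp add: gamma_process_def)

lemma measU[measurable]: "U \<tau> \<in> borel_measurable M" using gpa by (simp add: gamma_process_def)

lemma distU: "0 < \<tau> \<Longrightarrow> distributed M lborel (U \<tau>) (\<lambda>x. ennreal (gamma_density \<nu> \<tau> x))"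
  using gpa by (simp add: gamma_process_def)

lemma statU: "0 \<le> s \<Longrightarrow> 0 \<le> h \<Longrightarrow> distr M borel (\<lambda>\<omega>. U (s + h) \<omega> - U s \<omega>) = distr M borel (U h)"
  using gpa unfolding gamma_process_def by blast

lemma rcU: "\<omega> \<in> space M \<Longrightarrow> 0 \<le> s \<Longrightarrow> continuous (at_right s) (\<lambda>\<tau>. U \<tau> \<omega>)"
  using gpa unfolding gamma_process_def by blast

lemma laplace:
  assumes "0 < \<tau>" "s < 1"
  shows "(\<integral>\<^sup>+\<omega>. ennreal (exp (s * U \<tau> \<omega>)) \<partial>M) = ennreal ((1 - s) powr (-(\<tau>/\<nu>)))"
proof -
  define a where "a = \<tau> / \<nu>"
  have a: "0 < a" using assms nu_pos by (simp add: a_def)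
  have G: "0 < Gamma a" using a by (simp add: Gamma_real_pos)
  have "(\<integral>\<^sup>+\<omega>. ennreal (exp (s * U \<tau> \<omega>)) \<partial>M)
      = (\<integral>\<^sup>+x. ennreal (gamma_density \<nu> \<tau> x) * ennreal (exp (s * x)) \<partial>lborel)"
    by (subst distributed_nn_integral[OF distU[OF assms(1)], of "\<lambda>x. ennreal (exp (s * x))"]) auto
  also have "\<dots> = (\<integral>\<^sup>+x. ennreal (if 0 < x then x powr (a - 1) * exp (-((1 - s) * x)) else 0)
                      * ennreal (1 / Gamma a) \<partial>lborel)"
  proof (intro nn_integral_cong)
    fix x :: real
    have "gamma_density \<nu> \<tau> x * exp (s * x)
        = (if 0 < x then x powr (a - 1) * exp (-((1 - s) * x)) else 0) * (1 / Gamma a)"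
      by (auto simp: gamma_density_def a_def exp_add[symmetric] algebra_simps)
    moreover have "0 \<le> gamma_density \<nu> \<tau> x" using G by (auto simp: gamma_density_def a_def)
    ultimately show "ennreal (gamma_density \<nu> \<tau> x) * ennreal (exp (s * x))
        = ennreal (if 0 < x then x powr (a - 1) * exp (-((1 - s) * x)) else 0) * ennreal (1 / Gamma a)"
      using G by (simp add: ennreal_mult[symmetric])
  qed
  also have "\<dots> = (\<integral>\<^sup>+x. ennreal (if 0 < x then x powr (a - 1) * exp (-((1 - s) * x)) else 0) \<partial>lborel)
                      * ennreal (1 / Gamma a)"
    by (rule nn_integral_multc) measurable
  also have "\<dots> = ennreal (Gamma a * (1 - s) powr (-a)) * ennreal (1 / Gamma a)"
    using gamma_nn[OF a, of "1 - s"] assms by simp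
  also have "\<dots> = ennreal ((1 - s) powr (-a))"
    using G by (simp add: ennreal_mult[symmetric])
  finally show ?thesis by (simp add: a_def)
qed

lemma lower_tail:
  assumes "0 < \<tau>" "0 \<le> l"
  shows "measure M {\<omega>\<in>space M. U \<tau> \<omega> \<le> x} \<le> exp (l * x) * (1 + l) powr (-(\<tau>/\<nu>))"
proof -
  have "emeasure M {\<omega>\<in>space M. U \<tau> \<omega> \<le> x}
      = (\<integral>\<^sup>+\<omega>. indicator {\<omega>\<in>space M. U \<tau> \<omega> \<le> x} \<omega> \<partial>M)"
    by (rule nn_integral_indicator[symmetric]) measurable
  also have "\<dots> \<le> (\<integral>\<^sup>+\<omega>. ennreal (exp (l * x)) * ennreal (exp ((- l) * U \<tau> \<omega>)) \<partial>M)"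
  proof (intro nn_integral_mono)
    fix \<omega> assume "\<omega> \<in> space M"
    show "indicator {\<omega>\<in>space M. U \<tau> \<omega> \<le> x} \<omega> \<le> ennreal (exp (l * x)) * ennreal (exp ((- l) * U \<tau> \<omega>))"
    proof (cases "U \<tau> \<omega> \<le> x")
      case True
      have "0 \<le> l * x + (- l) * U \<tau> \<omega>" using True assms by (simp add: algebra_simps mult_left_mono)
      hence "1 \<le> exp (l * x + (- l) * U \<tau> \<omega>)" by simp
      hence "ennreal 1 \<le> ennreal (exp (l * x) * exp ((- l) * U \<tau> \<omega>))" by (simp add: exp_add[symmetric])
      thus ?thesis using True \<open>\<omega> \<in> space M\<close> by (simp add: ennreal_mult indicator_def)
    qed (simp add: indicator_def)
  qed
  also have "\<dots> = ennreal (exp (l * x)) * (\<integral>\<^sup>+\<omega>. ennreal (exp ((- l) * U \<tau> \<omega>)) \<partial>M)"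
    by (rule nn_integral_cmult) measurable
  also have "\<dots> = ennreal (exp (l * x) * (1 + l) powr (-(\<tau>/\<nu>)))"
    using laplace[OF assms(1), of "- l"] assms by (simp add: ennreal_mult)
  finally have "ennreal (measure M {\<omega>\<in>space M. U \<tau> \<omega> \<le> x}) \<le> ennreal (exp (l * x) * (1 + l) powr (-(\<tau>/\<nu>)))"
    by (simp add: emeasure_eq_measure)
  thus ?thesis by (simp add: ennreal_le_iff)
qed

lemma upper_tail:
  assumes "0 < \<tau>" "0 \<le> l" "l < 1"
  shows "measure M {\<omega>\<in>space M. x < U \<tau> \<omega>} \<le> exp (- (l * x)) * (1 - l) powr (-(\<tau>/\<nu>))"
proof -
  have "emeasure M {\<omega>\<in>space M. x < U \<tau> \<omega>}
      = (\<integral>\<^sup>+\<omega>. indicator {\<omega>\<in>space M. x < U \<tau> \<omega>} \<omega> \<partial>M)"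
    by (rule nn_integral_indicator[symmetric]) measurable
  also have "\<dots> \<le> (\<integral>\<^sup>+\<omega>. ennreal (exp (- (l * x))) * ennreal (exp (l * U \<tau> \<omega>)) \<partial>M)"
  proof (intro nn_integral_mono)
    fix \<omega> assume "\<omega> \<in> space M"
    show "indicator {\<omega>\<in>space M. x < U \<tau> \<omega>} \<omega> \<le> ennreal (exp (- (l * x))) * ennreal (exp (l * U \<tau> \<omega>))"
    proof (cases "x < U \<tau> \<omega>")
      case True
      have "0 \<le> - (l * x) + l * U \<tau> \<omega>" using True assms by (simp add: algebra_simps mult_left_mono)
      hence "1 \<le> exp (- (l * x) + l * U \<tau> \<omega>)" by simp
      hence "ennreal 1 \<le> ennreal (exp (- (l * x)) * exp (l * U \<tau> \<omega>))" by (simp add: exp_add[symmetric])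
      thus ?thesis using True \<open>\<omega> \<in> space M\<close> by (simp add: ennreal_mult indicator_def)
    qed (simp add: indicator_def)
  qed
  also have "\<dots> = ennreal (exp (- (l * x))) * (\<integral>\<^sup>+\<omega>. ennreal (exp (l * U \<tau> \<omega>)) \<partial>M)"
    by (rule nn_integral_cmult) measurable
  also have "\<dots> = ennreal (exp (- (l * x)) * (1 - l) powr (-(\<tau>/\<nu>)))"
    using laplace[OF assms(1), of "l"] assms by (simp add: ennreal_mult)
  finally have "ennreal (measure M {\<omega>\<in>space M. x < U \<tau> \<omega>}) \<le> ennreal (exp (- (l * x)) * (1 - l) powr (-(\<tau>/\<nu>)))"
    by (simp add: emeasure_eq_measure)
  thus ?thesis by (simp add: ennreal_le_iff)
qed

lemma incr_nonneg:
  assumes "0 \<le> r" "r < \<tau>"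
  shows "AE \<omega> in M. U r \<omega> \<le> U \<tau> \<omega>"
proof -
  define h where "h = \<tau> - r"
  have h: "0 < h" using assms by (simp add: h_def)
  have st: "distr M borel (\<lambda>\<omega>. U \<tau> \<omega> - U r \<omega>) = distr M borel (U h)"
    using statU[OF assms(1), of h] h by (simp add: h_def)
  define N where "N = (\<lambda>\<omega>. U \<tau> \<omega> - U r \<omega>) -` {..<0} \<inter> space M"
  have "emeasure M N = emeasure (distr M borel (\<lambda>\<omega>. U \<tau> \<omega> - U r \<omega>)) {..<0}"
    unfolding N_def by (subst emeasure_distr) auto
  also have "\<dots> = emeasure (distr M borel (U h)) {..<0}" by (simp add: st)
  also have "\<dots> = emeasure M (U h -` {..<0} \<inter> space M)" by (subst emeasure_distr) auto
  also have "\<dots> = (\<integral>\<^sup>+x. ennreal (gamma_density \<nu> h x) * indicator {..<0} x \<partial>lborel)"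
    by (rule distributed_emeasure[OF distU[OF h]]) auto
  also have "\<dots> = (integral\<^sup>N lborel (\<lambda>x::real. 0))"
    by (intro nn_integral_cong) (auto simp: gamma_density_def indicator_def)
  finally have N0: "emeasure M N = 0" by simp
  show ?thesis
    by (rule AE_I[OF _ N0]) (auto simp: N_def)
qed

lemma unbdd:
  shows "AE \<omega> in M. \<exists>n::nat. t < U (real n) \<omega>"
proof -
  define N where "N = {\<omega>\<in>space M. \<forall>n::nat. U (real n) \<omega> \<le> t}"
  have Nm: "N \<in> sets M" unfolding N_def by measurable
  define b where "b n = exp (1 * t) * (1 + 1) powr (-(real n/\<nu>))" for n :: nat
  have bnd: "measure M N \<le> b n" if "n \<ge> 1" for n
  proof -
    have "measure M N \<le> measure M {\<omega>\<in>space M. U (real n) \<omega> \<le> t}"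
      by (intro finite_measure_mono) (auto simp: N_def)
    also have "\<dots> \<le> b n" unfolding b_def using that by (intro lower_tail) auto
    finally show ?thesis .
  qed
  have "b \<longlonglongrightarrow> 0" unfolding b_def using nu_pos by real_asymp
  hence "measure M N \<le> 0"
    by (intro LIMSEQ_le_const[of b 0 "measure M N"]) (use bnd in auto)
  hence "emeasure M N = 0" using Nm by (simp add: emeasure_eq_measure measure_nonneg antisym)
 show ?thesis
  proof (rule AE_I[of _ _ N])
    show "{x \<in> space M. \<not> (\<exists>n::nat. t < U (real n) x)} \<subseteq> N"
      unfolding N_def by (simp add: not_less subset_eq)
  qed (use Nm \<open>emeasure M N = 0\<close> in auto)
qed


lemma dense_rat:
  assumes "\<omega> \<in> space M" "0 \<le> \<sigma>" "t < U \<sigma> \<omega>" "\<sigma> < b"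
  shows "\<exists>r::rat. \<sigma> < real_of_rat r \<and> real_of_rat r < b \<and> t < U (real_of_rat r) \<omega>"
proof -
  have "((\<lambda>\<tau>. U \<tau> \<omega>) \<longlongrightarrow> U \<sigma> \<omega>) (at_right \<sigma>)"
    using rcU[OF assms(1,2)] by (simp add: continuous_within)
  hence "eventually (\<lambda>\<tau>. t < U \<tau> \<omega>) (at_right \<sigma>)" using assms(3) by (rule order_tendstoD)
  then obtain c where c: "c > \<sigma>" "\<And>\<tau>. \<sigma> < \<tau> \<Longrightarrow> \<tau> < c \<Longrightarrow> t < U \<tau> \<omega>"
    unfolding eventually_at_right_field by blast
  have "\<sigma> < min c b" using c assms by simp
  then obtain x where x: "x \<in> \<rat>" "\<sigma> < x" "x < min c b" using Rats_dense_in_real by blast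
  then obtain r where r: "x = real_of_rat r" by (auto elim: Rats_cases)
  show ?thesis using x c r by (intro exI[of _ r]) auto
qed

lemma V_le:
  assumes "0 \<le> \<tau>" "t < U \<tau> \<omega>"
  shows "inverse_process U t \<omega> \<le> \<tau>"
  unfolding inverse_process_def
  by (rule cInf_lower) (use assms in \<open>auto intro: bdd_belowI[of _ 0]\<close>)

lemma V_nonneg:
  assumes "0 \<le> \<tau>" "t < U \<tau> \<omega>"
  shows "0 \<le> inverse_process U t \<omega>"
  unfolding inverse_process_def
  by (rule cInf_greatest) (use assms in auto)

lemma V_ge:
  assumes "\<omega> \<in> space M" "0 < \<tau>"
    and mono: "\<forall>r::rat. 0 \<le> real_of_rat r \<and> real_of_rat r < \<tau> \<longrightarrow> U (real_of_rat r) \<omega> \<le> U \<tau> \<omega>"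
    and "U \<tau> \<omega> \<le> t" and "0 \<le> \<sigma>0" "t < U \<sigma>0 \<omega>"
  shows "\<tau> \<le> inverse_process U t \<omega>"
  unfolding inverse_process_def
proof (rule cInf_greatest)
  show "{\<tau>. 0 \<le> \<tau> \<and> t < U \<tau> \<omega>} \<noteq> {}" using assms by auto
next
  fix \<sigma> assume "\<sigma> \<in> {\<tau>. 0 \<le> \<tau> \<and> t < U \<tau> \<omega>}"
  hence s: "0 \<le> \<sigma>" "t < U \<sigma> \<omega>" by auto
  show "\<tau> \<le> \<sigma>"
  proof (rule ccontr)
    assume "\<not> \<tau> \<le> \<sigma>"
    hence "\<sigma> < \<tau>" by simp
    then obtain r where r: "\<sigma> < real_of_rat r" "real_of_rat r < \<tau>" "t < U (real_of_rat r) \<omega>"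
      using dense_rat[OF assms(1) s] by blast
    have "0 \<le> real_of_rat r" using r s by linarith
    hence "U (real_of_rat r) \<omega> \<le> U \<tau> \<omega>" using mono r by blast
    thus False using r assms by simp
  qed
qed

lemma V_meas[measurable]: "(\<lambda>\<omega>. inverse_process U t \<omega>) \<in> borel_measurable M"
proof -
  have eq: "{\<omega>\<in>space M. inverse_process U t \<omega> < a} =
     {\<omega>\<in>space M. ((\<forall>r::rat. \<not> (0 \<le> real_of_rat r \<and> t < U (real_of_rat r) \<omega>)) \<and> Inf ({}::real set) < a)
       \<or> (\<exists>r::rat. 0 \<le> real_of_rat r \<and> real_of_rat r < a \<and> t < U (real_of_rat r) \<omega>)}" for a
  proof (intro Collect_cong conj_cong refl)
    fix \<omega> assume \<omega>: "\<omega> \<in> space M"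
    define S where "S = {\<tau>. 0 \<le> \<tau> \<and> t < U \<tau> \<omega>}"
    show "(inverse_process U t \<omega> < a) =
     (((\<forall>r::rat. \<not> (0 \<le> real_of_rat r \<and> t < U (real_of_rat r) \<omega>)) \<and> Inf ({}::real set) < a)
       \<or> (\<exists>r::rat. 0 \<le> real_of_rat r \<and> real_of_rat r < a \<and> t < U (real_of_rat r) \<omega>))"
    proof (cases "S = {}")
      case True
      have "inverse_process U t \<omega> = Inf S" by (simp add: inverse_process_def S_def)
      hence "inverse_process U t \<omega> = Inf {}" using True by simp
      moreover have "\<forall>r::rat. \<not> (0 \<le> real_of_rat r \<and> t < U (real_of_rat r) \<omega>)"
        using True by (auto simp: S_def)
      ultimately show ?thesis by auto
    next
      case False
      then obtain \<sigma>0 where s0: "0 \<le> \<sigma>0" "t < U \<sigma>0 \<omega>" by (auto simp: S_def)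
      obtain r0 where "\<sigma>0 < real_of_rat r0" "t < U (real_of_rat r0) \<omega>"
        using dense_rat[OF \<omega> s0, of "\<sigma>0 + 1"] by auto
      moreover have "0 \<le> real_of_rat r0" using s0 \<open>\<sigma>0 < real_of_rat r0\<close> by linarith
      ultimately have n1: "\<not> (\<forall>r::rat. \<not> (0 \<le> real_of_rat r \<and> t < U (real_of_rat r) \<omega>))"
        by blast
      have bdd: "bdd_below S" by (auto simp: S_def intro: bdd_belowI[of _ 0])
      have "(inverse_process U t \<omega> < a) = (\<exists>x\<in>S. x < a)"
        unfolding inverse_process_def S_def[symmetric] using cInf_less_iff[OF False bdd] .
      also have "\<dots> = (\<exists>r::rat. 0 \<le> real_of_rat r \<and> real_of_rat r < a \<and> t < U (real_of_rat r) \<omega>)"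
      proof
        assume "\<exists>x\<in>S. x < a"
        then obtain x where x: "0 \<le> x" "t < U x \<omega>" "x < a" by (auto simp: S_def)
        then obtain r where r: "x < real_of_rat r" "real_of_rat r < a" "t < U (real_of_rat r) \<omega>"
          using dense_rat[OF \<omega> x(1,2) x(3)] by auto
        have "0 \<le> real_of_rat r" using x r by linarith
        with r show "\<exists>r::rat. 0 \<le> real_of_rat r \<and> real_of_rat r < a \<and> t < U (real_of_rat r) \<omega>"
          by (intro exI[of _ r]) auto
      next
        assume "\<exists>r::rat. 0 \<le> real_of_rat r \<and> real_of_rat r < a \<and> t < U (real_of_rat r) \<omega>"
        then obtain r where "0 \<le> real_of_rat r" "real_of_rat r < a" "t < U (real_of_rat r) \<omega>" by blast
        thus "\<exists>x\<in>S. x < a" unfolding S_def by blast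
      qed
      finally show ?thesis using n1 by blast
    qed
  qed
  show ?thesis
    unfolding borel_measurable_iff_less
  proof
    fix a
    have A1: "{\<omega>\<in>space M. \<exists>r::rat. 0 \<le> real_of_rat r \<and> real_of_rat r < a \<and> t < U (real_of_rat r) \<omega>} \<in> sets M"
      by measurable
    have A0: "{\<omega>\<in>space M. \<forall>r::rat. \<not> (0 \<le> real_of_rat r \<and> t < U (real_of_rat r) \<omega>)} \<in> sets M"
      by measurable
    have "{\<omega>\<in>space M. inverse_process U t \<omega> < a} =
       (if Inf ({}::real set) < a then {\<omega>\<in>space M. \<forall>r::rat. \<not> (0 \<le> real_of_rat r \<and> t < U (real_of_rat r) \<omega>)} else {})
       \<union> {\<omega>\<in>space M. \<exists>r::rat. 0 \<le> real_of_rat r \<and> real_of_rat r < a \<and> t < U (real_of_rat r) \<omega>}"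
      unfolding eq by auto
    thus "{\<omega>\<in>space M. inverse_process U t \<omega> < a} \<in> sets M"
      using A0 A1 by auto
  qed
qed

lemma ln_lb1: "0 \<le> (x::real) \<Longrightarrow> x / (1 + x) \<le> ln (1 + x)"
proof -
  assume x: "0 \<le> x"
  have "ln (1 / (1 + x)) \<le> 1 / (1 + x) - 1" using x by (intro ln_le_minus_one) auto
  moreover have "ln (1 / (1 + x)) = - ln (1 + x)" using x by (simp add: ln_div)
  moreover have "1 / (1 + x) - 1 = - (x / (1 + x))" using x by (simp add: field_simps)
  ultimately show ?thesis by simp
qed

lemma ln_lb2: "0 \<le> (x::real) \<Longrightarrow> x < 1 \<Longrightarrow> - (x / (1 - x)) \<le> ln (1 - x)"
proof -
  assume x: "0 \<le> x" "x < 1"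
  have "ln (1 / (1 - x)) \<le> 1 / (1 - x) - 1" using x by (intro ln_le_minus_one) auto
  moreover have "ln (1 / (1 - x)) = - ln (1 - x)" using x by (simp add: ln_div)
  moreover have "1 / (1 - x) - 1 = x / (1 - x)" using x by (simp add: field_simps)
  ultimately show ?thesis by simp
qed

end


lemma summ_a:
  fixes \<epsilon> q ll :: real
  assumes ll: "0 < ll" and e: "0 \<le> \<epsilon>" and q: "0 < q"
  shows "summable (\<lambda>k::nat. (2 + \<epsilon> + real k) powr q * exp (-(ll * real k)))"
proof -
  define m where "m = 2 * q / ll"
  have m: "0 < m" using ll q by (simp add: m_def)
  define C where "C = exp (q * (ln m - 1) + (ll/2) * (2 + \<epsilon>))"
  have bound: "(2 + \<epsilon> + real k) powr q * exp (-(ll * real k)) \<le> C * exp (-(ll/2)) ^ k" for k :: nat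
  proof -
    define x where "x = 2 + \<epsilon> + real k"
    have x: "0 < x" using e by (simp add: x_def)
    have "ln (x / m) \<le> x / m - 1" using x m by (intro ln_le_minus_one) simp
    hence "ln x - ln m \<le> x / m - 1" using x m by (simp add: ln_div)
    hence "q * (ln x - ln m) \<le> q * (x / m - 1)" using q by (intro mult_left_mono) auto
    hence h1: "q * ln x - q * ln m \<le> q * (x / m) - q" by (simp add: right_diff_distrib)
    have h2: "q * (x / m) = (ll / 2) * x" using ll q by (simp add: m_def field_simps)
    have qx: "q * ln x \<le> (ll/2) * x + q * ln m - q" using h1 h2 by linarith
    have "x powr q * exp (-(ll * real k)) = exp (q * ln x - ll * real k)"
      using x by (simp add: powr_def exp_diff exp_minus field_simps)
    also have "\<dots> \<le> exp ((ll/2) * x + q * ln m - q - ll * real k)" using qx by simp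
    also have "(ll/2) * x + q * ln m - q - ll * real k = (q * (ln m - 1) + (ll/2) * (2 + \<epsilon>)) + real k * (-(ll/2))"
      by (simp add: x_def algebra_simps)
    also have "exp ((q * (ln m - 1) + (ll/2) * (2 + \<epsilon>)) + real k * (-(ll/2))) = C * exp (real k * (-(ll/2)))"
      unfolding C_def by (rule exp_add)
    also have "exp (real k * (-(ll/2))) = exp (-(ll/2)) ^ k" by (rule exp_of_nat_mult)
    finally show ?thesis by (simp add: x_def)
  qed
  have "summable (\<lambda>k::nat. C * exp (-(ll/2)) ^ k)" using ll by (intro summable_mult) simp
  thus ?thesis
    by (rule summable_comparison_test[rotated]) (use bound in \<open>auto intro!: exI[of _ 0]\<close>)
qed


lemma ratio_lim:
  fixes r :: "real \<Rightarrow> real" and q :: real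
  assumes q: "0 < q"
  assumes H: "\<And>\<epsilon>. 0 < \<epsilon> \<Longrightarrow> \<epsilon> < 1 \<Longrightarrow> \<exists>\<delta>>0. \<exists>\<phi>>0. \<exists>K.
     eventually (\<lambda>t. (1 - \<epsilon>) powr q * (1 - exp (-(t * \<phi>))) \<le> r t \<and> r t \<le> (1 + \<epsilon>) powr q + exp (-(t * \<delta>)) * K) at_top"
  shows "(r \<longlongrightarrow> 1) at_top"
proof (rule tendstoI)
  fix e :: real assume e: "0 < e"
  have l1: "((\<lambda>x::real. (1 + x) powr q) \<longlongrightarrow> 1) (at_right 0)" by real_asymp
  have l2: "((\<lambda>x::real. (1 - x) powr q) \<longlongrightarrow> 1) (at_right 0)" by real_asymp
  have "eventually (\<lambda>x. (1 + x) powr q < 1 + e/2) (at_right (0::real))"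
    using l1 e by (intro order_tendstoD(2)) auto
  moreover have "eventually (\<lambda>x. 1 - e/2 < (1 - x) powr q) (at_right (0::real))"
    using l2 e by (intro order_tendstoD(1)) auto
  moreover have "eventually (\<lambda>x. x < 1) (at_right (0::real))"
    by (intro order_tendstoD(2)[OF tendsto_ident_at]) auto
  ultimately have "eventually (\<lambda>x. (1 + x) powr q < 1 + e/2 \<and> 1 - e/2 < (1 - x) powr q \<and> x < 1) (at_right (0::real))"
    by eventually_elim auto
  then obtain b where b: "b > 0" "\<And>y. 0 < y \<Longrightarrow> y < b \<Longrightarrow> (1 + y) powr q < 1 + e/2 \<and> 1 - e/2 < (1 - y) powr q \<and> y < 1"
    unfolding eventually_at_right_field by blast
  define \<epsilon> where "\<epsilon> = b / 2"
  have \<epsilon>: "0 < \<epsilon>" "\<epsilon> < 1" "(1 + \<epsilon>) powr q < 1 + e/2" "1 - e/2 < (1 - \<epsilon>) powr q"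
    using b(1) b(2)[of \<epsilon>] by (auto simp: \<epsilon>_def)
  obtain \<delta> \<phi> K where dp: "\<delta> > 0" "\<phi> > 0" and ev:
    "eventually (\<lambda>t. (1 - \<epsilon>) powr q * (1 - exp (-(t * \<phi>))) \<le> r t \<and> r t \<le> (1 + \<epsilon>) powr q + exp (-(t * \<delta>)) * K) at_top"
    using H[OF \<epsilon>(1,2)] by blast
  have "((\<lambda>t::real. exp (-(t * \<delta>))) \<longlongrightarrow> 0) at_top" using dp by real_asymp
  hence "((\<lambda>t::real. exp (-(t * \<delta>)) * K) \<longlongrightarrow> 0) at_top" by (rule tendsto_mult_left_zero)
  hence ev1: "eventually (\<lambda>t. exp (-(t * \<delta>)) * K < e/2) at_top" using e by (intro order_tendstoD(2)) auto
  have "((\<lambda>t::real. exp (-(t * \<phi>))) \<longlongrightarrow> 0) at_top" using dp by real_asymp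
  hence ev2: "eventually (\<lambda>t. exp (-(t * \<phi>)) < e/2) at_top" using e by (intro order_tendstoD(2)) auto
  have p1: "(1 - \<epsilon>) powr q \<le> 1" using \<epsilon> q by (intro powr_le1) auto
  have p0: "0 \<le> (1 - \<epsilon>) powr q" by simp
  show "eventually (\<lambda>t. dist (r t) 1 < e) at_top"
    using ev ev1 ev2
  proof eventually_elim
    case (elim t)
    define p where "p = (1 - \<epsilon>) powr q"
    define y where "y = exp (-(t * \<phi>))"
    have y0: "0 \<le> y" by (simp add: y_def)
    have py: "p * y \<le> y" using p1 y0 by (simp add: p_def mult_left_le_one_le)
    have "p * (1 - y) = p - p * y" by (simp add: algebra_simps)
    hence lo: "p - y \<le> r t" using elim py unfolding p_def y_def by linarith
    have "1 - e/2 < p" using \<epsilon> by (simp add: p_def)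
    hence "1 - e < r t" using lo elim y_def by linarith
    moreover have "r t < 1 + e" using elim \<epsilon> by linarith
    ultimately show ?case by (simp add: dist_real_def abs_less_iff)
  qed
qed


context gp
begin

lemma upper_int:
  assumes t: "1 \<le> t" and e: "0 < \<epsilon>" and q: "0 < q"
    and ll: "ll = ln (1 + \<epsilon>/2)" and \<delta>: "\<delta> = (1 + \<epsilon>) * ln (1 + \<epsilon>/2) - \<epsilon>/2"
    and K: "K = (\<Sum>k. (2 + \<epsilon> + real k) powr q * exp (-(ll * real k)))"
  shows "(\<integral>\<^sup>+\<omega>. ennreal (inverse_process U t \<omega> powr q) \<partial>M)
          \<le> ennreal ((\<nu> * t) powr q * (1 + \<epsilon>) powr q + (\<nu> * t) powr q * exp (-(t * \<delta>)) * K)"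
proof -
  define T where "T = \<nu> * t"
  have T: "0 < T" using nu_pos t by (simp add: T_def)
  define E where "E k = {\<omega>\<in>space M. U ((1 + \<epsilon> + real k) * T) \<omega> \<le> t}" for k :: nat
  have Em[measurable]: "E k \<in> sets M" for k unfolding E_def by measurable
  define A where "A = T powr q * (1 + \<epsilon>) powr q"
  define B where "B k = T powr q * (2 + \<epsilon> + real k) powr q" for k :: nat
  define a where "a k = (2 + \<epsilon> + real k) powr q * exp (-(ll * real k))" for k :: nat
  have lpos: "0 < ll" using e ll by simp
  have summ: "summable a" unfolding a_def by (rule summ_a[OF lpos _ q]) (use e in simp)
  have pw: "AE \<omega> in M. ennreal (inverse_process U t \<omega> powr q) \<le> ennreal A + (\<Sum>k. ennreal (B k) * indicator (E k) \<omega>)"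
    using AE_space unbdd[of t]
  proof eventually_elim
    case (elim \<omega>)
    then obtain n where n: "t < U (real n) \<omega>" by auto
    define V where "V = inverse_process U t \<omega>"
    have V0: "0 \<le> V" unfolding V_def by (rule V_nonneg[OF _ n]) simp
    show ?case
    proof (cases "V \<le> (1 + \<epsilon>) * T")
      case True
      have "V powr q \<le> ((1 + \<epsilon>) * T) powr q" by (rule powr_mono2) (use q V0 True in auto)
      also have "\<dots> = A" using e T by (simp add: A_def powr_mult mult.commute)
      finally have "ennreal (V powr q) \<le> ennreal A" by (rule ennreal_leI)
      also have "\<dots> \<le> ennreal A + (\<Sum>k. ennreal (B k) * indicator (E k) \<omega>)" by simp
      finally show ?thesis unfolding V_def .
    next
      case False
      define y where "y = V / T - (1 + \<epsilon>)"
      have y: "0 < y" using False T by (simp add: y_def field_simps)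
      have c1: "real_of_int \<lceil>y\<rceil> - 1 < y" "y \<le> real_of_int \<lceil>y\<rceil>" using ceiling_correct[of y] by auto
      have "(0::real) < real_of_int \<lceil>y\<rceil>" using c1 y by linarith
      hence cpos: "0 < \<lceil>y\<rceil>" by simp
      define k where "k = nat (\<lceil>y\<rceil> - 1)"
      have ky: "real k = real_of_int \<lceil>y\<rceil> - 1" using cpos by (simp add: k_def)
      have lo': "1 + \<epsilon> + real k < V / T" using c1 ky unfolding y_def by linarith
      have hi': "V / T \<le> 2 + \<epsilon> + real k" using c1 ky unfolding y_def by linarith
      have lo: "(1 + \<epsilon> + real k) * T < V" using lo' T by (simp add: field_simps)
      have hi: "V \<le> (2 + \<epsilon> + real k) * T" using hi' T by (simp add: field_simps)
      have inE: "\<omega> \<in> E k"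
      proof -
        have "\<not> t < U ((1 + \<epsilon> + real k) * T) \<omega>"
        proof
          assume "t < U ((1 + \<epsilon> + real k) * T) \<omega>"
          hence "V \<le> (1 + \<epsilon> + real k) * T" unfolding V_def
            by (rule V_le[rotated]) (use e T in simp)
          thus False using lo by simp
        qed
        thus ?thesis using elim by (simp add: E_def not_less)
      qed
      have "V powr q \<le> ((2 + \<epsilon> + real k) * T) powr q" by (rule powr_mono2) (use q V0 hi in auto)
      also have "\<dots> = B k" using e T by (simp add: B_def powr_mult mult.commute)
      finally have "ennreal (V powr q) \<le> ennreal (B k) * indicator (E k) \<omega>"
        using inE by (simp add: ennreal_leI)
      also have "\<dots> \<le> (\<Sum>k. ennreal (B k) * indicator (E k) \<omega>)"
        using ennreal_suminf_lessD[of "\<lambda>k. ennreal (B k) * indicator (E k) \<omega>" "ennreal (B k) * indicator (E k) \<omega>" k]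
        by (meson not_less order.irrefl)
      also have "\<dots> \<le> ennreal A + (\<Sum>k. ennreal (B k) * indicator (E k) \<omega>)" by simp
      finally show ?thesis unfolding V_def .
    qed
  qed
  have "(\<integral>\<^sup>+\<omega>. ennreal (inverse_process U t \<omega> powr q) \<partial>M)
      \<le> (\<integral>\<^sup>+\<omega>. ennreal A + (\<Sum>k. ennreal (B k) * indicator (E k) \<omega>) \<partial>M)"
    by (rule nn_integral_mono_AE[OF pw])
  also have "\<dots> = (\<integral>\<^sup>+\<omega>. ennreal A \<partial>M) + (\<integral>\<^sup>+\<omega>. (\<Sum>k. ennreal (B k) * indicator (E k) \<omega>) \<partial>M)"
    by (rule nn_integral_add) measurable
  also have "(\<integral>\<^sup>+\<omega>. ennreal A \<partial>M) = ennreal A" by (simp add: emeasure_space_1)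
  also have "(\<integral>\<^sup>+\<omega>. (\<Sum>k. ennreal (B k) * indicator (E k) \<omega>) \<partial>M)
      = (\<Sum>k. (\<integral>\<^sup>+\<omega>. ennreal (B k) * indicator (E k) \<omega> \<partial>M))"
    by (rule nn_integral_suminf) measurable
  also have "\<dots> = (\<Sum>k. ennreal (B k) * emeasure M (E k))"
    by (simp add: nn_integral_cmult_indicator)
  also have "\<dots> \<le> (\<Sum>k. ennreal (T powr q * exp (-(t * \<delta>)) * a k))"
  proof (rule suminf_le)
    fix k
    have tau: "0 < (1 + \<epsilon> + real k) * T" using e T by simp
    have "measure M (E k) \<le> exp ((\<epsilon>/2) * t) * (1 + \<epsilon>/2) powr (-((1 + \<epsilon> + real k) * T / \<nu>))"
      unfolding E_def by (rule lower_tail[OF tau]) (use e in simp)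
    also have "(1 + \<epsilon> + real k) * T / \<nu> = (1 + \<epsilon> + real k) * t"
      using nu_pos by (simp add: T_def)
    also have "exp ((\<epsilon>/2) * t) * (1 + \<epsilon>/2) powr (-((1 + \<epsilon> + real k) * t))
             = exp (-(t * \<delta>)) * exp (-(ll * real k * t))"
      using e by (simp add: powr_def \<delta> ll exp_add[symmetric] algebra_simps)
    also have "\<dots> \<le> exp (-(t * \<delta>)) * exp (-(ll * real k))"
    proof -
      have "ll * real k \<le> ll * real k * t"
        using mult_left_mono[of 1 t "ll * real k"] t lpos by simp
      thus ?thesis by simp
    qed
    finally have mk: "measure M (E k) \<le> exp (-(t * \<delta>)) * exp (-(ll * real k))" .
    have B0: "0 \<le> B k" by (simp add: B_def)
    have "ennreal (B k) * emeasure M (E k) = ennreal (B k * measure M (E k))"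
      using B0 by (simp add: emeasure_eq_measure ennreal_mult)
    also have "\<dots> \<le> ennreal (B k * (exp (-(t * \<delta>)) * exp (-(ll * real k))))"
      by (intro ennreal_leI mult_left_mono mk B0)
    also have "B k * (exp (-(t * \<delta>)) * exp (-(ll * real k))) = T powr q * exp (-(t * \<delta>)) * a k"
      by (simp add: B_def a_def)
    finally show "ennreal (B k) * emeasure M (E k) \<le> ennreal (T powr q * exp (-(t * \<delta>)) * a k)" .
  qed auto
  also have "\<dots> = ennreal (\<Sum>k. T powr q * exp (-(t * \<delta>)) * a k)"
    by (rule suminf_ennreal2) (simp add: a_def, rule summable_mult[OF summ])
  also have "(\<Sum>k. T powr q * exp (-(t * \<delta>)) * a k) = T powr q * exp (-(t * \<delta>)) * K"
  proof -
    have "a = (\<lambda>k. (2 + \<epsilon> + real k) powr q * exp (-(ll * real k)))" by (rule ext) (simp add: a_def)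
    hence "K = suminf a" by (simp add: K)
    thus ?thesis using suminf_mult[OF summ, of "T powr q * exp (-(t * \<delta>))"] by simp
  qed
  also have "ennreal A + ennreal (T powr q * exp (-(t * \<delta>)) * K) = ennreal (A + T powr q * exp (-(t * \<delta>)) * K)"
  proof -
    have "a = (\<lambda>k. (2 + \<epsilon> + real k) powr q * exp (-(ll * real k)))" by (rule ext) (simp add: a_def)
    hence "K = suminf a" by (simp add: K)
    hence K0: "0 \<le> K" using summ by (simp add: suminf_nonneg a_def)
    show ?thesis using K0 by (intro ennreal_plus[symmetric]) (auto simp: A_def)
  qed
  finally show ?thesis by (simp add: A_def T_def)
qed

lemma lower_int:
  assumes t: "0 < t" and e: "0 < \<epsilon>" "\<epsilon> < 1" and q: "0 < q"
    and \<phi>: "\<phi> = \<epsilon>/2 + (1 - \<epsilon>) * ln (1 - \<epsilon>/2)"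
  shows "ennreal (((1 - \<epsilon>) * (\<nu> * t)) powr q * (1 - exp (-(t * \<phi>))))
          \<le> (\<integral>\<^sup>+\<omega>. ennreal (inverse_process U t \<omega> powr q) \<partial>M)"
proof -
  define \<tau> where "\<tau> = (1 - \<epsilon>) * (\<nu> * t)"
  have \<tau>: "0 < \<tau>" using e t nu_pos by (simp add: \<tau>_def)
  have mono: "AE \<omega> in M. \<forall>r::rat. 0 \<le> real_of_rat r \<and> real_of_rat r < \<tau> \<longrightarrow> U (real_of_rat r) \<omega> \<le> U \<tau> \<omega>"
  proof (subst AE_all_countable, intro allI)
    fix r :: rat
    show "AE \<omega> in M. 0 \<le> real_of_rat r \<and> real_of_rat r < \<tau> \<longrightarrow> U (real_of_rat r) \<omega> \<le> U \<tau> \<omega>"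
    proof (cases "0 \<le> real_of_rat r \<and> real_of_rat r < \<tau>")
      case True
      then show ?thesis using incr_nonneg[of "real_of_rat r" \<tau>] by simp
    next
      case False
      then show ?thesis by (intro AE_I2) blast
    qed
  qed
  define F where "F = {\<omega>\<in>space M. U \<tau> \<omega> \<le> t}"
  have Fm[measurable]: "F \<in> sets M" unfolding F_def by measurable
  have pw: "AE \<omega> in M. ennreal (\<tau> powr q) * indicator F \<omega> \<le> ennreal (inverse_process U t \<omega> powr q)"
    using mono unbdd[of t] AE_space
  proof eventually_elim
    case (elim \<omega>)
    show ?case
    proof (cases "U \<tau> \<omega> \<le> t")
      case True
      obtain n where n: "t < U (real n) \<omega>" using elim by auto
      have "\<tau> \<le> inverse_process U t \<omega>"
        by (rule V_ge[OF _ \<tau> _ True _ n]) (use elim in auto)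
      hence tv: "\<tau> \<le> inverse_process U t \<omega>" .
      have "\<tau> powr q \<le> inverse_process U t \<omega> powr q" by (rule powr_mono2) (use q \<tau> tv in auto)
      thus ?thesis using True elim by (simp add: indicator_def F_def ennreal_leI)
    qed (simp add: indicator_def F_def)
  qed
  have I: "ennreal (\<tau> powr q) * emeasure M F \<le> (\<integral>\<^sup>+\<omega>. ennreal (inverse_process U t \<omega> powr q) \<partial>M)"
    using nn_integral_mono_AE[OF pw] by (simp add: nn_integral_cmult_indicator[OF Fm])
  define G where "G = {\<omega>\<in>space M. t < U \<tau> \<omega>}"
  have Gm[measurable]: "G \<in> sets M" unfolding G_def by measurable
  have "space M - G = F" by (auto simp: F_def G_def not_less)
  hence pF: "prob F = 1 - prob G" using prob_compl[OF Gm] by simp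
  have "prob G \<le> exp (- ((\<epsilon>/2) * t)) * (1 - \<epsilon>/2) powr (-(\<tau>/\<nu>))"
    unfolding G_def by (rule upper_tail[OF \<tau>]) (use e in auto)
  also have "\<tau> / \<nu> = (1 - \<epsilon>) * t" using nu_pos by (simp add: \<tau>_def)
  also have "exp (- ((\<epsilon>/2) * t)) * (1 - \<epsilon>/2) powr (-((1 - \<epsilon>) * t)) = exp (-(t * \<phi>))"
    using e by (simp add: powr_def \<phi> exp_add[symmetric] algebra_simps)
  finally have pG: "1 - exp (-(t * \<phi>)) \<le> prob F" using pF by simp
  have "ennreal (\<tau> powr q * (1 - exp (-(t * \<phi>)))) \<le> ennreal (\<tau> powr q * prob F)"
    by (intro ennreal_leI mult_left_mono pG) simp
  also have "\<dots> = ennreal (\<tau> powr q) * emeasure M F"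
    by (simp add: emeasure_eq_measure ennreal_mult)
  finally show ?thesis using I unfolding \<tau>_def by simp
qed

end


theorem mainTheorem4:
  fixes M :: "'a measure" and U :: "real \<Rightarrow> 'a \<Rightarrow> real" and \<nu> q :: real
  assumes "0 < \<nu>"
    and "gamma_process M \<nu> U"
    and "0 < q"
  shows "(\<lambda>t. integral\<^sup>L M (\<lambda>\<omega>. inverse_process U t \<omega> powr q)) \<sim>[at_top] (\<lambda>t. (\<nu> * t) powr q)"
proof -
  interpret gp M \<nu> U by (rule gp.intro) (rule assms(2))
  define f where "f t = integral\<^sup>L M (\<lambda>\<omega>. inverse_process U t \<omega> powr q)" for t
  define g where "g t = (\<nu> * t) powr q" for t
  define I where "I t = (\<integral>\<^sup>+\<omega>. ennreal (inverse_process U t \<omega> powr q) \<partial>M)" for t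
  have fI: "f t = enn2real (I t)" for t
    unfolding f_def I_def by (rule integral_eq_nn_integral) auto
  have key: "\<exists>\<delta>>0. \<exists>\<phi>>0. \<exists>K. eventually (\<lambda>t. (1 - \<epsilon>) powr q * (1 - exp (-(t * \<phi>))) \<le> f t / g t
      \<and> f t / g t \<le> (1 + \<epsilon>) powr q + exp (-(t * \<delta>)) * K) at_top"
    if e: "0 < \<epsilon>" "\<epsilon> < 1" for \<epsilon>
  proof -
    define ll where "ll = ln (1 + \<epsilon>/2)"
    define \<delta> where "\<delta> = (1 + \<epsilon>) * ln (1 + \<epsilon>/2) - \<epsilon>/2"
    define \<phi> where "\<phi> = \<epsilon>/2 + (1 - \<epsilon>) * ln (1 - \<epsilon>/2)"
    define K where "K = (\<Sum>k. (2 + \<epsilon> + real k) powr q * exp (-(ll * real k)))"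
    have dpos: "0 < \<delta>"
    proof -
      have "(\<epsilon>/2) / (1 + \<epsilon>/2) \<le> ln (1 + \<epsilon>/2)" using e by (intro ln_lb1) simp
      hence "(1 + \<epsilon>) * ((\<epsilon>/2) / (1 + \<epsilon>/2)) \<le> (1 + \<epsilon>) * ln (1 + \<epsilon>/2)"
        using e by (intro mult_left_mono) auto
      moreover have "(1 + \<epsilon>) * ((\<epsilon>/2) / (1 + \<epsilon>/2)) - \<epsilon>/2 = (\<epsilon>/2) * (\<epsilon>/2) / (1 + \<epsilon>/2)"
        using e by (simp add: field_simps)
      moreover have "0 < (\<epsilon>/2) * (\<epsilon>/2) / (1 + \<epsilon>/2)" using e by simp
      ultimately show ?thesis unfolding \<delta>_def by linarith
    qed
    have ppos: "0 < \<phi>"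
    proof -
      have "- ((\<epsilon>/2) / (1 - \<epsilon>/2)) \<le> ln (1 - \<epsilon>/2)" using e by (intro ln_lb2) auto
      hence "(1 - \<epsilon>) * (- ((\<epsilon>/2) / (1 - \<epsilon>/2))) \<le> (1 - \<epsilon>) * ln (1 - \<epsilon>/2)"
        using e by (intro mult_left_mono) auto
      moreover have "\<epsilon>/2 + (1 - \<epsilon>) * (- ((\<epsilon>/2) / (1 - \<epsilon>/2))) = (\<epsilon>/2) * (\<epsilon>/2) / (1 - \<epsilon>/2)"
        using e by (simp add: field_simps)
      moreover have "0 < (\<epsilon>/2) * (\<epsilon>/2) / (1 - \<epsilon>/2)" using e by simp
      ultimately show ?thesis unfolding \<phi>_def by linarith
    qed
    have llpos: "0 < ll" using e by (simp add: ll_def)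
    have K0: "0 \<le> K" unfolding K_def
      by (intro suminf_nonneg summ_a[OF llpos _ assms(3)]) (use e in auto)
    have "eventually (\<lambda>t. (1 - \<epsilon>) powr q * (1 - exp (-(t * \<phi>))) \<le> f t / g t
      \<and> f t / g t \<le> (1 + \<epsilon>) powr q + exp (-(t * \<delta>)) * K) at_top"
      using eventually_ge_at_top[of "1::real"]
    proof eventually_elim
      case (elim t)
      have t: "1 \<le> t" using elim .
      have tpos: "0 < t" using t by simp
      have gpos: "0 < g t" using nu_pos tpos by (simp add: g_def)
      have up: "I t \<le> ennreal (g t * (1 + \<epsilon>) powr q + g t * exp (-(t * \<delta>)) * K)"
        unfolding I_def g_def by (rule upper_int[OF t e(1) assms(3) ll_def \<delta>_def K_def])
      have lo: "ennreal (((1 - \<epsilon>) * (\<nu> * t)) powr q * (1 - exp (-(t * \<phi>)))) \<le> I t"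
        unfolding I_def by (rule lower_int[OF tpos e assms(3) \<phi>_def])
      have Ifin: "I t < top" using up by (simp add: le_less_trans)
      have f_up: "f t \<le> g t * (1 + \<epsilon>) powr q + g t * exp (-(t * \<delta>)) * K"
        unfolding fI by (rule enn2real_leI[OF _ up]) (use gpos K0 in simp)
      define X where "X = ((1 - \<epsilon>) * (\<nu> * t)) powr q * (1 - exp (-(t * \<phi>)))"
      have f_lo: "X \<le> f t"
      proof (cases "0 \<le> X")
        case True
        have "enn2real (ennreal X) \<le> enn2real (I t)"
          by (rule enn2real_mono[OF _ Ifin]) (use lo in \<open>simp add: X_def\<close>)
        thus ?thesis using True by (simp add: fI)
      next
        case False
        have "0 \<le> enn2real (I t)" by (rule enn2real_nonneg)
        thus ?thesis unfolding fI using False by linarith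
      qed
      have Xeq: "X = (1 - \<epsilon>) powr q * (1 - exp (-(t * \<phi>))) * g t"
        using e nu_pos tpos by (simp add: X_def g_def powr_mult)
      have c1: "(1 - \<epsilon>) powr q * (1 - exp (-(t * \<phi>))) \<le> f t / g t"
        using f_lo Xeq gpos by (simp add: pos_le_divide_eq)
      have c2: "f t / g t \<le> (1 + \<epsilon>) powr q + exp (-(t * \<delta>)) * K"
        using f_up gpos by (simp add: pos_divide_le_eq algebra_simps)
      show ?case using c1 c2 by blast
    qed
    thus ?thesis using dpos ppos by blast
  qed
  have "((\<lambda>t. f t / g t) \<longlongrightarrow> 1) at_top"
    by (rule ratio_lim[of q "\<lambda>t. f t / g t", OF assms(3)]) (rule key)
  thus ?thesis unfolding f_def g_def by (rule asymp_equivI')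
qed

end
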